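(* Let $n\ge1$, $k\ge0$ be integers and define the $n\times n$ matrices $M_0(n,k)=\big(\mathcal P^+_{i+j}(k,0)\big)_{0\le i,j\le n-1}$ and $MP_0(n,k)=\big(\sum_{l\ge0}\mathcal P^+_{i+j}(k,l)\big)_{0\le i,j\le n-1}$. Then $$A(n)\cdot MP_0(n,k)=M_0(n,k)+C_0(n,k),$$ where $C_0(n,k)=(C_{i,j})_{0\le i,j\le n-1}$ has $C_{i,j}=0$ for $i\le n-2$ and $C_{n-1,j}=(xy)^{n-1}\sum_{l\ge0}\mathcal P_j(0,n-k+l)$.
   Context: Three-step paths consist of up-steps $(1,1)$, level steps $(1,0)$ and down-steps $(1,-1)$. Weights: $w((1,1))=1$, $w((1,0))=x+y$, $w((1,-1))=xy$; a path's weight is the product of its step weights. $\mathcal P_n(k,l)$ is the sum of weights of all three-step paths from $(0,k)$ to $(n,l)$; $\mathcal P^+_n(k,l)$ the same restricted to paths never running below the $x$-axis. The matrix $A(n)=(A_{n,i,j})_{0\le i,j\le n-1}$ is defined by $A_{n,i,j}=\frac{(1+x)(1+y)}{xy}$ if $i=j<n-1$; $-\frac1{xy}$ if $i=j-1<n-1$; $A_{n,n-1,n-1}=\frac{xy-(n-1)(x+y)}{xy}$; for $j<n-1$, $$A_{n,n-1,j}=\frac{(-1)^{n+j}}{xy}\sum_{l=j}^{n}\left(\binom lj\binom{n+j-1-l}{j}x^{l-j}y^{n-1-l}+\binom lj\binom{n+j-l}{j}x^{l-j}y^{n-l}\right);$$ and $0$ otherwise (binomial coefficients $\binom ab=0$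 if $b<0$ or $a<b$). *)

theory Defs
  imports Main
begin

text \<open>Three-step paths are encoded by their list of vertical increments
  (each in {-1,0,1}): 1 is an up-step (1,1), 0 a level step (1,0), -1 a down-step (1,-1).\<close>

definition step_weight :: "'a::field \<Rightarrow> 'a \<Rightarrow> int \<Rightarrow> 'a" where
  "step_weight x y s = (if s = 1 then 1 else if s = 0 then x + y else x * y)"

definition path_weight :: "'a::field \<Rightarrow> 'a \<Rightarrow> int list \<Rightarrow> 'a" where
  "path_weight x y ss = (\<Prod>s\<leftarrow>ss. step_weight x y s)"

definition paths :: "nat \<Rightarrow> int \<Rightarrow> int \<Rightarrow> int list set" where
  "paths n k l = {ss. set ss \<subseteq> {-1,0,1} \<and> length ss = n \<and> k + sum_list ss = l}"

definition pos_paths :: "nat \<Rightarrow> int \<Rightarrow> int \<Rightarrow> int list set" where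
  "pos_paths n k l = {ss \<in> paths n k l. \<forall>i\<le>n. k + sum_list (take i ss) \<ge> 0}"

definition PP :: "'a::field \<Rightarrow> 'a \<Rightarrow> nat \<Rightarrow> int \<Rightarrow> int \<Rightarrow> 'a" where
  "PP x y n k l = (\<Sum>ss\<in>paths n k l. path_weight x y ss)"

definition PPpos :: "'a::field \<Rightarrow> 'a \<Rightarrow> nat \<Rightarrow> int \<Rightarrow> int \<Rightarrow> 'a" where
  "PPpos x y n k l = (\<Sum>ss\<in>pos_paths n k l. path_weight x y ss)"

definition ibinom :: "int \<Rightarrow> int \<Rightarrow> nat" where
  "ibinom a b = (if b < 0 \<or> a < b then 0 else nat a choose nat b)"

text \<open>The matrix A(n), entries indexed by 0 \<le> i,j \<le> n-1.\<close>
definition Amat :: "'a::field \<Rightarrow> 'a \<Rightarrow> nat \<Rightarrow> nat \<Rightarrow> nat \<Rightarrow> 'a" where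
  "Amat x y n i j =
    (if i = j \<and> i < n - 1 then (1 + x) * (1 + y) / (x * y)
     else if i + 1 = j \<and> i < n - 1 then - 1 / (x * y)
     else if i = n - 1 \<and> j = n - 1 then (x * y - of_nat (n - 1) * (x + y)) / (x * y)
     else if i = n - 1 \<and> j < n - 1 then
       (-1) ^ (n + j) / (x * y) *
       (\<Sum>l=j..n.
          of_nat (ibinom (int l) (int j) * ibinom (int n + int j - 1 - int l) (int j))
            * x powi (int l - int j) * y powi (int n - 1 - int l)
        + of_nat (ibinom (int l) (int j) * ibinom (int n + int j - int l) (int j))
            * x powi (int l - int j) * y powi (int n - int l))
     else 0)"

end

theory Submission
  imports Defs "HOL-Computational_Algebra.Formal_Power_Series"
begin

unbundle fps_syntax

definition Lop :: "'a::field \<Rightarrow> 'a \<Rightarrow> (int \<Rightarrow> 'a) \<Rightarrow> int \<Rightarrow> 'a" where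
  "Lop x y f h = (if h < 0 then 0 else f (h+1) + (x+y) * f h + x*y * f (h-1))"

primrec Lp :: "'a::field \<Rightarrow> 'a \<Rightarrow> nat \<Rightarrow> (int \<Rightarrow> 'a) \<Rightarrow> int \<Rightarrow> 'a" where
  "Lp x y 0 f = f" | "Lp x y (Suc N) f = Lop x y (Lp x y N f)"

definition one :: "int \<Rightarrow> 'a::field" where "one h = (if h \<ge> 0 then 1 else 0)"
definition dl :: "int \<Rightarrow> int \<Rightarrow> 'a::field" where "dl l h = (if h = l \<and> h \<ge> 0 then 1 else 0)"

lemma Lop_sum: "finite F \<Longrightarrow> Lop x y (\<lambda>h. \<Sum>i\<in>F. c i * f i h) h0 = (\<Sum>i\<in>F. c i * Lop x y (f i) h0)"
  by (simp add: Lop_def sum_distrib_left sum.distrib algebra_simps)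

lemma Lop_scale: "Lop x y (\<lambda>h. c * f h) h0 = c * Lop x y f h0"
  by (simp add: Lop_def algebra_simps)

lemma Lop_add: "Lop x y (\<lambda>h. f h + g h) h0 = Lop x y f h0 + Lop x y g h0"
  by (simp add: Lop_def algebra_simps)

lemma Lop_diff: "Lop x y (\<lambda>h. f h - g h) h0 = Lop x y f h0 - Lop x y g h0"
  by (simp add: Lop_def algebra_simps)

lemma Lp_sum: "finite F \<Longrightarrow> Lp x y N (\<lambda>h. \<Sum>i\<in>F. c i * f i h) h0 = (\<Sum>i\<in>F. c i * Lp x y N (f i) h0)"
proof (induction N arbitrary: h0)
  case 0 then show ?case by simp
next
  case (Suc N)
  have "Lp x y N (\<lambda>h. \<Sum>i\<in>F. c i * f i h) = (\<lambda>h. \<Sum>i\<in>F. c i * Lp x y N (f i) h)"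
    using Suc by auto
  then show ?case using Suc.prems by (simp add: Lop_sum)
qed

lemma Lp_scale: "Lp x y N (\<lambda>h. c * f h) h0 = c * Lp x y N f h0"
proof (induction N arbitrary: h0)
  case 0 then show ?case by simp
next
  case (Suc N)
  have "Lp x y N (\<lambda>h. c * f h) = (\<lambda>h. c * Lp x y N f h)" using Suc by auto
  then show ?case by (simp add: Lop_scale)
qed

lemma Lp_add: "Lp x y N (\<lambda>h. f h + g h) h0 = Lp x y N f h0 + Lp x y N g h0"
proof (induction N arbitrary: h0)
  case 0 then show ?case by simp
next
  case (Suc N)
  have "Lp x y N (\<lambda>h. f h + g h) = (\<lambda>h. Lp x y N f h + Lp x y N g h)" using Suc by auto
  then show ?case by (simp add: Lop_add)
qed

lemma Lp_diff: "Lp x y N (\<lambda>h. f h - g h) h0 = Lp x y N f h0 - Lp x y N g h0"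
proof (induction N arbitrary: h0)
  case 0 then show ?case by simp
next
  case (Suc N)
  have "Lp x y N (\<lambda>h. f h - g h) = (\<lambda>h. Lp x y N f h - Lp x y N g h)" using Suc by auto
  then show ?case by (simp add: Lop_diff)
qed

lemma Lp_local: "(\<And>h'. h' \<le> h0 + int N \<Longrightarrow> f h' = g h') \<Longrightarrow> Lp x y N f h0 = Lp x y N g h0"
proof (induction N arbitrary: h0)
  case 0 then show ?case by simp
next
  case (Suc N)
  have a: "Lp x y N f (h0 + 1) = Lp x y N g (h0+1)" by (rule Suc.IH) (rule Suc.prems, simp)
  have b: "Lp x y N f h0 = Lp x y N g h0" by (rule Suc.IH) (rule Suc.prems, simp)
  have c: "Lp x y N f (h0 - 1) = Lp x y N g (h0 - 1)" by (rule Suc.IH) (rule Suc.prems, simp)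
  show ?case using a b c by (simp add: Lop_def)
qed

lemma Lp_comp: "Lp x y (m + j) f = Lp x y j (Lp x y m f)"
  by (induction j) auto

lemma Lp_neg: "h < 0 \<Longrightarrow> (\<And>h'. h' < 0 \<Longrightarrow> f h' = 0) \<Longrightarrow> Lp x y N f h = 0"
  by (cases N) (auto simp: Lop_def)

lemma finite_paths: "finite (paths N h l)"
  by (rule finite_subset[OF _ finite_lists_length_eq[of "{-1,0,1::int}" N]]) (auto simp: paths_def)

lemma finite_pos_paths: "finite (pos_paths N h l)"
  by (rule finite_subset[OF _ finite_paths[of N h l]]) (auto simp: pos_paths_def)

lemma pos_paths_0: "pos_paths 0 h l = (if h = l \<and> h \<ge> 0 then {[]} else {})"
  by (auto simp: pos_paths_def paths_def)

lemma pos_paths_neg: "h < 0 \<Longrightarrow> pos_paths N h l = {}"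
  by (force simp: pos_paths_def)

lemma mem_pos_paths_Suc:
  "ss \<in> pos_paths (Suc N) h l \<longleftrightarrow> (h \<ge> 0 \<and> (\<exists>s t. ss = s#t \<and> s \<in> {-1,0,1} \<and> t \<in> pos_paths N (h+s) l))"
proof
  assume A: "ss \<in> pos_paths (Suc N) h l"
  then obtain s t where st: "ss = s # t" by (cases ss) (auto simp: pos_paths_def paths_def)
  from A have h0: "h \<ge> 0" using spec[of _ 0] by (auto simp: pos_paths_def)
  have "t \<in> pos_paths N (h+s) l"
    unfolding pos_paths_def paths_def
  proof (intro CollectI conjI allI impI)
    show "set t \<subseteq> {-1,0,1}" "length t = N" "h + s + sum_list t = l"
      using A st by (auto simp: pos_paths_def paths_def)
    fix i assume "i \<le> N"
    then have "h + sum_list (take (Suc i) ss) \<ge> 0" using A by (auto simp: pos_paths_def)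
    then show "h + s + sum_list (take i t) \<ge> 0" using st by (simp add: add.assoc)
  qed
  moreover have "s \<in> {-1,0,1}" using A st by (auto simp: pos_paths_def paths_def)
  ultimately show "h \<ge> 0 \<and> (\<exists>s t. ss = s#t \<and> s \<in> {-1,0,1} \<and> t \<in> pos_paths N (h+s) l)"
    using h0 st by blast
next
  assume "h \<ge> 0 \<and> (\<exists>s t. ss = s#t \<and> s \<in> {-1,0,1} \<and> t \<in> pos_paths N (h+s) l)"
  then obtain s t where h0: "h \<ge> 0" and st: "ss = s#t" "s \<in> {-1,0,1}" and t: "t \<in> pos_paths N (h+s) l"
    by blast
  show "ss \<in> pos_paths (Suc N) h l"
    unfolding pos_paths_def paths_def
  proof (intro CollectI conjI allI impI)
    show "set ss \<subseteq> {-1,0,1}" "length ss = Suc N" "h + sum_list ss = l"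
      using t st by (auto simp: pos_paths_def paths_def add.assoc)
    fix i assume i: "i \<le> Suc N"
    show "h + sum_list (take i ss) \<ge> 0"
    proof (cases i)
      case 0 then show ?thesis using h0 by simp
    next
      case (Suc i')
      then have "h + s + sum_list (take i' t) \<ge> 0" using t i by (auto simp: pos_paths_def)
      then show ?thesis using st Suc by (simp add: add.assoc)
    qed
  qed
qed

lemma pos_paths_Suc: "h \<ge> 0 \<Longrightarrow> pos_paths (Suc N) h l =
   Cons 1 ` pos_paths N (h+1) l \<union> Cons 0 ` pos_paths N h l \<union> Cons (-1) ` pos_paths N (h-1) l"
  apply (rule set_eqI)
  apply (simp only: mem_pos_paths_Suc)
  apply auto
  done

lemma path_weight_Cons: "path_weight x y (s#t) = step_weight x y s * path_weight x y t"
  by (simp add: path_weight_def)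

lemma PPpos_Suc: "PPpos x y (Suc N) h l = (if h < 0 then 0 else
   PPpos x y N (h+1) l + (x+y) * PPpos x y N h l + x*y * PPpos x y N (h-1) l)"
proof (cases "h < 0")
  case True then show ?thesis by (simp add: PPpos_def pos_paths_neg)
next
  case False
  let ?w = "path_weight x y"
  have S: "sum ?w (Cons s ` pos_paths N k l) = step_weight x y s * PPpos x y N k l" for s k
    by (simp add: sum.reindex PPpos_def path_weight_Cons sum_distrib_left)
  have "PPpos x y (Suc N) h l = sum ?w (Cons 1 ` pos_paths N (h+1) l \<union> Cons 0 ` pos_paths N h l \<union> Cons (-1) ` pos_paths N (h-1) l)"
    using False by (simp add: PPpos_def pos_paths_Suc)
  also have "\<dots> = sum ?w (Cons 1 ` pos_paths N (h+1) l \<union> Cons 0 ` pos_paths N h l) + sum ?w (Cons (-1) ` pos_paths N (h-1) l)"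
    by (rule sum.union_disjoint) (auto simp: finite_pos_paths)
  also have "sum ?w (Cons 1 ` pos_paths N (h+1) l \<union> Cons 0 ` pos_paths N h l) = sum ?w (Cons 1 ` pos_paths N (h+1) l) + sum ?w (Cons 0 ` pos_paths N h l)"
    by (rule sum.union_disjoint) (auto simp: finite_pos_paths)
  finally show ?thesis using False by (simp add: S step_weight_def)
qed

lemma PPpos_Lp: "PPpos x y N h l = Lp x y N (dl l) h"
proof (induction N arbitrary: h)
  case 0 then show ?case by (simp add: PPpos_def pos_paths_0 dl_def path_weight_def)
next
  case (Suc N) then show ?case by (simp add: PPpos_Suc Lop_def)
qed

lemma sum_dl: "(\<Sum>l\<le>B. dl (a + int l) h :: 'a::field) = (if a \<le> h \<and> h \<le> a + int B \<and> h \<ge> 0 then 1 else 0)"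
proof -
  have "(\<Sum>l\<le>B. dl (a + int l) h :: 'a) = (\<Sum>l\<le>B. if l = nat (h - a) then (if h \<ge> 0 \<and> h \<ge> a then 1 else 0) else 0)"
    by (rule sum.cong) (auto simp: dl_def)
  also have "\<dots> = (if a \<le> h \<and> h \<le> a + int B \<and> h \<ge> 0 then 1 else 0)"
    by (subst sum.delta) auto
  finally show ?thesis .
qed

lemma sum_PPpos_one: "h + int N \<le> int B \<Longrightarrow> (\<Sum>l\<le>B. PPpos x y N h (int l)) = Lp x y N one h"
proof -
  assume hb: "h + int N \<le> int B"
  have "(\<Sum>l\<le>B. PPpos x y N h (int l)) = (\<Sum>l\<le>B. 1 * Lp x y N (dl (0 + int l)) h)"
    by (simp add: PPpos_Lp)
  also have "\<dots> = Lp x y N (\<lambda>h'. \<Sum>l\<le>B. 1 * dl (0 + int l) h') h"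
    by (rule Lp_sum[symmetric]) simp
  also have "\<dots> = Lp x y N one h"
    by (rule Lp_local) (use hb in \<open>auto simp: one_def sum_dl[of 0, simplified]\<close>)
  finally show ?thesis .
qed

lemma sum_list_le_length: "set ss \<subseteq> {-1,0,1::int} \<Longrightarrow> sum_list ss \<le> int (length ss)"
  by (induction ss) auto

lemma pos_eq: "int j < l \<Longrightarrow> 0 \<le> k \<Longrightarrow> pos_paths j k l = paths j k l"
proof -
  assume jl: "int j < l" and k: "0 \<le> k"
  { fix ss i assume ss: "ss \<in> paths j k l" and i: "i \<le> j"
    have "sum_list (drop i ss) \<le> int (length (drop i ss))"
      by (rule sum_list_le_length) (use ss in \<open>auto simp: paths_def dest: in_set_dropD\<close>)
    moreover have "sum_list (take i ss) + sum_list (drop i ss) = sum_list ss"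
      by (metis append_take_drop_id sum_list_append)
    ultimately have "k + sum_list (take i ss) \<ge> 0" using ss jl by (auto simp: paths_def)
  }
  then show ?thesis by (auto simp: pos_paths_def)
qed

lemma PP_shift: "PP x y j 0 (l - k) = PP x y j k l"
  unfolding PP_def paths_def by (rule sum.cong) auto

definition cc :: "'a::field \<Rightarrow> 'a \<Rightarrow> nat \<Rightarrow> nat \<Rightarrow> 'a" where
  "cc x y N j = (\<Sum>l=j..N. of_nat ((l choose j) * ((N+j-l) choose j)) * x^(l-j) * y^(N-l))"

definition Af :: "'a::field \<Rightarrow> nat \<Rightarrow> 'a fps" where
  "Af x j = Abs_fps (\<lambda>a. of_nat ((a+j) choose j) * x^a)"

definition Cf :: "'a::field \<Rightarrow> 'a \<Rightarrow> nat \<Rightarrow> 'a fps" where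
  "Cf x y j = fps_X^j * Af x j * Af y j"

lemma cc_fps: "cc x y N j = Cf x y j $ N"
proof (cases "N < j")
  case True then show ?thesis
    by (simp add: cc_def Cf_def fps_X_power_mult_nth mult.assoc)
next
  case False
  have "Cf x y j $ N = (\<Sum>i=0..N-j. of_nat ((i+j) choose j) * x^i * (of_nat ((N-j-i+j) choose j) * y^(N-j-i)))"
    using False unfolding Cf_def mult.assoc fps_X_power_mult_nth by (simp add: fps_mult_nth Af_def mult.assoc)
  also have "\<dots> = (\<Sum>i=0..N-j. of_nat (((i+j) choose j) * ((N+j-(i+j)) choose j)) * x^((i+j)-j) * y^(N-(i+j)))"
    by (rule sum.cong) (use False in \<open>auto simp: algebra_simps\<close>)
  also have "\<dots> = cc x y N j"
    unfolding cc_def using False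
    by (subst sum.shift_bounds_cl_nat_ivl[of _ 0 j "N-j", symmetric]) simp
  finally show ?thesis by simp
qed

lemma one_minus_mult_nth: fixes F :: "'a::comm_ring_1 fps" shows "((1 - fps_const c * fps_X) * F) $ n = (if n = 0 then F $ 0 else F $ n - c * F $ (n-1))"
proof -
  have "(1 - fps_const c * fps_X) * F = F - fps_const c * (fps_X * F)" by (simp add: left_diff_distrib mult.assoc)
  then show ?thesis by simp
qed

lemma Af_Suc: "(1 - fps_const x * fps_X) * Af x (Suc j) = Af x j"
proof (rule fps_ext)
  fix n show "((1 - fps_const x * fps_X) * Af x (Suc j)) $ n = Af x j $ n"
  proof (cases n)
    case 0 then show ?thesis by (simp add: one_minus_mult_nth Af_def binomial_eq_0)
  next
    case (Suc m)
    have "of_nat ((Suc m + Suc j) choose Suc j) * x ^ Suc m - x * (of_nat ((m + Suc j) choose Suc j) * x ^ m)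
        = (of_nat ((Suc m + Suc j) choose Suc j) - of_nat ((m + Suc j) choose Suc j)) * x ^ Suc m"
      by (simp add: algebra_simps)
    also have "of_nat ((Suc m + Suc j) choose Suc j) - of_nat ((m + Suc j) choose Suc j) = (of_nat ((Suc m + j) choose j) :: 'a)"
      by (simp add: of_nat_diff)
    finally show ?thesis using Suc by (simp add: one_minus_mult_nth Af_def)
  qed
qed

lemma Af_0: "(1 - fps_const x * fps_X) * Af x 0 = 1"
proof (rule fps_ext)
  fix n show "((1 - fps_const x * fps_X) * Af x 0) $ n = (1::'a fps) $ n"
    by (cases n) (simp_all add: one_minus_mult_nth Af_def)
qed

lemma Cf_Suc: "((1 - fps_const x * fps_X) * (1 - fps_const y * fps_X)) * Cf x y (Suc j) = fps_X * Cf x y j"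
proof -
  have "((1 - fps_const x * fps_X) * (1 - fps_const y * fps_X)) * Cf x y (Suc j)
     = fps_X * fps_X^j * ((1 - fps_const x * fps_X) * Af x (Suc j)) * ((1 - fps_const y * fps_X) * Af y (Suc j))"
    by (simp add: Cf_def ac_simps)
  also have "\<dots> = fps_X * Cf x y j" unfolding Af_Suc by (simp add: Cf_def ac_simps)
  finally show ?thesis .
qed

lemma Cf_0: "((1 - fps_const x * fps_X) * (1 - fps_const y * fps_X)) * Cf x y 0 = 1"
proof -
  have "((1 - fps_const x * fps_X) * (1 - fps_const y * fps_X)) * Cf x y 0
     = ((1 - fps_const x * fps_X) * Af x 0) * ((1 - fps_const y * fps_X) * Af y 0)"
    by (simp add: Cf_def ac_simps)
  also have "\<dots> = 1" by (simp add: Af_0)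
  finally show ?thesis .
qed

lemma Pq_nth: fixes F :: "'a::field fps"
  shows "(((1 - fps_const x * fps_X) * (1 - fps_const y * fps_X)) * F) $ (Suc (Suc n))
     = F $ (Suc (Suc n)) - (x+y) * F $ (Suc n) + x*y * F $ n"
  by (simp only: mult.assoc one_minus_mult_nth) (simp add: algebra_simps one_minus_mult_nth)

lemma cc_rec: "cc x y (Suc (Suc N)) j = (x+y) * cc x y (Suc N) j - x*y * cc x y N j
    + (if j = 0 then 0 else cc x y (Suc N) (j-1))"
proof (cases j)
  case 0
  have "(((1 - fps_const x * fps_X) * (1 - fps_const y * fps_X)) * Cf x y 0) $ (Suc (Suc N)) = 0"
    by (simp add: Cf_0)
  then show ?thesis using 0 unfolding cc_fps Pq_nth by (simp add: algebra_simps)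
next
  case (Suc i)
  have "(((1 - fps_const x * fps_X) * (1 - fps_const y * fps_X)) * Cf x y (Suc i)) $ (Suc (Suc N)) = Cf x y i $ Suc N"
    by (simp add: Cf_Suc)
  then show ?thesis using Suc unfolding cc_fps Pq_nth by (simp add: algebra_simps)
qed

lemma cc_gt: "N < j \<Longrightarrow> cc x y N j = 0"
  by (simp add: cc_def)

lemma cc_diag: "cc x y N N = 1"
  by (simp add: cc_def)

lemma cc_sub: "cc x y (Suc N) N = of_nat (Suc N) * (x+y)"
proof -
  have "{N..Suc N} = {N, Suc N}" by auto
  then show ?thesis by (simp add: cc_def algebra_simps)
qed

definition rho :: "'a::field \<Rightarrow> 'a \<Rightarrow> nat \<Rightarrow> int \<Rightarrow> 'a" where
  "rho x y N h = (\<Sum>j\<le>N. ((-1)^j * cc x y N j) * Lp x y j one h)"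

lemma rho_ext: "N \<le> M \<Longrightarrow> rho x y N h = (\<Sum>j\<le>M. ((-1)^j * cc x y N j) * Lp x y j one h)"
  unfolding rho_def by (rule sum.mono_neutral_left) (auto simp: cc_gt)

lemma rho_rec: "rho x y (Suc (Suc N)) h = (x+y) * rho x y (Suc N) h - Lop x y (rho x y (Suc N)) h - x*y * rho x y N h"
proof -
  let ?T = "\<lambda>j. Lp x y j one h"
  let ?f = "\<lambda>j. (-1)^j * (if j = 0 then 0 else cc x y (Suc N) (j-1)) * ?T j"
  have "rho x y (Suc (Suc N)) h = (\<Sum>j\<le>Suc (Suc N). (-1)^j * ((x+y) * cc x y (Suc N) j - x*y * cc x y N j
    + (if j = 0 then 0 else cc x y (Suc N) (j-1))) * ?T j)"
    unfolding rho_def by (simp only: cc_rec)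
  also have "\<dots> = (x+y) * (\<Sum>j\<le>Suc (Suc N). ((-1)^j * cc x y (Suc N) j) * ?T j)
      - x*y * (\<Sum>j\<le>Suc (Suc N). ((-1)^j * cc x y N j) * ?T j) + (\<Sum>j\<le>Suc (Suc N). ?f j)"
    by (simp add: sum_distrib_left sum.distrib sum_subtractf algebra_simps)
  also have "(\<Sum>j\<le>Suc (Suc N). ((-1)^j * cc x y (Suc N) j) * ?T j) = rho x y (Suc N) h"
    by (rule rho_ext[symmetric]) simp
  also have "(\<Sum>j\<le>Suc (Suc N). ((-1)^j * cc x y N j) * ?T j) = rho x y N h"
    by (rule rho_ext[symmetric]) simp
  also have "(\<Sum>j\<le>Suc (Suc N). ?f j) = ?f 0 + (\<Sum>i\<le>Suc N. ?f (Suc i))"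
    by (rule sum.atMost_Suc_shift)
  also have "\<dots> = - (\<Sum>i\<le>Suc N. ((-1)^i * cc x y (Suc N) i) * Lop x y (Lp x y i one) h)"
    by (simp add: sum_negf[symmetric])
  also have "(\<Sum>i\<le>Suc N. ((-1)^i * cc x y (Suc N) i) * Lop x y (Lp x y i one) h) = Lop x y (rho x y (Suc N)) h"
    unfolding rho_def by (rule Lop_sum[symmetric]) simp
  finally show ?thesis by simp
qed

definition G :: "'a::field \<Rightarrow> nat \<Rightarrow> 'a" where "G p m = (\<Sum>i<m. p^i)"

lemma G_Suc: "G p (Suc m) = 1 + p * G p m"
  unfolding G_def sum.lessThan_Suc_shift by (simp add: sum_distrib_left)

lemma G_Suc': "G p (Suc m) = G p m + p^m"
  unfolding G_def by simp

definition gg :: "'a::field \<Rightarrow> 'a \<Rightarrow> nat \<Rightarrow> int \<Rightarrow> 'a" where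
  "gg x y N h = (if h < 0 then 0 else G (x*y) (min N (nat h) + 1))"

lemma gg_rec: "gg x y (Suc (Suc N)) h = Lop x y (gg x y (Suc N)) h - (x+y) * gg x y (Suc N) h - x*y * gg x y N h"
proof (cases "h < 0")
  case True then show ?thesis by (simp add: gg_def Lop_def)
next
  case False
  show ?thesis
  proof (cases "h = 0")
    case True then show ?thesis by (simp add: gg_def Lop_def G_Suc G_def)
  next
    case False
    with \<open>\<not> h < 0\<close> obtain h' where h: "h = int h' + 1" by (intro that[of "nat (h - 1)"]) simp
    have b: "\<not> h < 0" "\<not> h + 1 < 0" "\<not> h - 1 < 0" using h by auto
    have nh: "nat h = Suc h'" "nat (h+1) = Suc (Suc h')" "nat (h-1) = h'" using h by auto
    have e1: "gg x y (Suc (Suc N)) h = G (x*y) (Suc (min (Suc N) h') + 1)" using b by (simp add: gg_def nh)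
    have e2: "gg x y (Suc N) (h+1) = G (x*y) (Suc (min N (Suc h')) + 1)" using b by (simp add: gg_def nh)
    have e3: "gg x y (Suc N) h = G (x*y) (Suc (min N h') + 1)" using b by (simp add: gg_def nh)
    have e4: "gg x y (Suc N) (h-1) = G (x*y) (min (Suc N) h' + 1)" using b by (simp add: gg_def nh)
    have e5: "gg x y N h = G (x*y) (min N (Suc h') + 1)" using b by (simp add: gg_def nh)
    have "Lop x y (gg x y (Suc N)) h = gg x y (Suc N) (h+1) + (x+y) * gg x y (Suc N) h + x*y * gg x y (Suc N) (h-1)"
      using b by (simp add: Lop_def)
    then show ?thesis
      unfolding e1 e2 e3 e4 e5 by (simp add: G_Suc algebra_simps)
  qed
qed

lemma rho_gg: "rho x y N h = (-1)^N * gg x y N h"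
proof -
  have "(\<forall>h. rho x y N h = (-1)^N * gg x y N h) \<and> (\<forall>h. rho x y (Suc N) h = (-1)^(Suc N) * gg x y (Suc N) h)"
  proof (induction N)
    case 0
    have r0: "rho x y 0 h = gg x y 0 h" for h
      by (simp add: rho_def gg_def cc_diag one_def G_def)
    have c10: "cc x y (Suc 0) 0 = x + y" using cc_sub[of x y 0] by simp
    have r1: "rho x y 1 h = - gg x y 1 h" for h
    proof (cases "h < 0")
      case True then show ?thesis by (simp add: rho_def gg_def one_def Lop_def)
    next
      case False
      then show ?thesis
        by (cases "h = 0") (auto simp: rho_def gg_def one_def Lop_def c10 cc_diag G_def algebra_simps)
    qed
    show ?case using r0 r1 by simp
  next
    case (Suc N)
    have f: "rho x y (Suc N) = (\<lambda>h. (-1)^(Suc N) * gg x y (Suc N) h)" using Suc by auto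
    have "rho x y (Suc (Suc N)) h = (-1)^(Suc (Suc N)) * gg x y (Suc (Suc N)) h" for h
      unfolding rho_rec gg_rec f Lop_scale using Suc by (simp add: algebra_simps)
    then show ?case using Suc by simp
  qed
  then show ?thesis by simp
qed

lemma ib1: "j \<le> l \<Longrightarrow> ibinom (int l) (int j) = l choose j"
  by (simp add: ibinom_def)

lemma ib2: "l \<le> n \<Longrightarrow> ibinom (int n + int j - int l) (int j) = (n + j - l) choose j"
proof -
  assume "l \<le> n"
  then have "nat (int n + int j - int l) = n + j - l" "\<not> (int j < 0 \<or> int n + int j - int l < int j)" by auto
  then show ?thesis unfolding ibinom_def by simp
qed

lemma pw: "j \<le> l \<Longrightarrow> (x::'a::field) powi (int l - int j) = x ^ (l - j)"
proof -
  assume "j \<le> l"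
  then have "int l - int j = int (l - j)" by simp
  then show ?thesis by (simp only: power_int_of_nat)
qed

lemma sumT2: "(\<Sum>l=j..n. of_nat (ibinom (int l) (int j) * ibinom (int n + int j - int l) (int j))
            * x powi (int l - int j) * y powi (int n - int l)) = cc x y n j"
  unfolding cc_def by (rule sum.cong) (auto simp: ib1 ib2 pw)

lemma sumT1: "(\<Sum>l=j..Suc n. of_nat (ibinom (int l) (int j) * ibinom (int (Suc n) + int j - 1 - int l) (int j))
            * x powi (int l - int j) * y powi (int (Suc n) - 1 - int l)) = cc x y n j"
proof (cases "j \<le> Suc n")
  case False then show ?thesis by (simp add: cc_def)
next
  case True
  have "(\<Sum>l=j..Suc n. of_nat (ibinom (int l) (int j) * ibinom (int (Suc n) + int j - 1 - int l) (int j))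
            * x powi (int l - int j) * y powi (int (Suc n) - 1 - int l))
      = (\<Sum>l=j..n. of_nat (ibinom (int l) (int j) * ibinom (int n + int j - int l) (int j))
            * x powi (int l - int j) * y powi (int n - int l))"
  proof -
    have e1: "\<And>l. int (Suc n) + int j - 1 - int l = int n + int j - int l" by simp
    have e2: "\<And>l. int (Suc n) - 1 - int l = int n - int l" by simp
    have z: "ibinom (int j - 1) (int j) = 0" by (simp add: ibinom_def)
    show ?thesis unfolding e1 e2 sum.cl_ivl_Suc using True by (simp add: z)
  qed
  then show ?thesis using sumT2[of j n x y] by (rule trans)
qed

lemma Amat_last: assumes "j < n"
  shows "Amat x y (Suc n) n j = (-1)^(Suc n + j) / (x*y) * (cc x y n j + cc x y (Suc n) j)"
proof -
  have c1: "(n = j \<and> n < n) = False" "(n + 1 = j \<and> n < n) = False" "(n = n \<and> j = n) = False"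
      "(n = n \<and> j < n) = True" using assms by auto
  have "Amat x y (Suc n) n j = (-1)^(Suc n + j) / (x*y) *
       (\<Sum>l=j..Suc n.
          of_nat (ibinom (int l) (int j) * ibinom (int (Suc n) + int j - 1 - int l) (int j))
            * x powi (int l - int j) * y powi (int (Suc n) - 1 - int l)
        + of_nat (ibinom (int l) (int j) * ibinom (int (Suc n) + int j - int l) (int j))
            * x powi (int l - int j) * y powi (int (Suc n) - int l))"
    unfolding Amat_def diff_Suc_1 c1 if_False if_True ..
  also have "\<dots> = (-1)^(Suc n + j) / (x*y) * (cc x y n j + cc x y (Suc n) j)"
    unfolding sum.distrib sumT1 sumT2 ..
  finally show ?thesis .
qed

lemma Amat_corner: "Amat x y (Suc n) n n = (x*y - of_nat n * (x+y)) / (x*y)"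
proof -
  have c: "(n = n \<and> n < n) = False" "(n+1 = n \<and> n < n) = False" "(n = n \<and> n = n) = True" by auto
  show ?thesis unfolding Amat_def diff_Suc_1 c if_False if_True ..
qed

lemma Amat_row: assumes "i < n"
  shows "Amat x y (Suc n) i m = (if m = i then (1+x)*(1+y)/(x*y) else if m = Suc i then - 1/(x*y) else 0)"
proof (cases "m = i")
  case True
  then have c: "(i = m \<and> i < n) = True" using assms by auto
  show ?thesis unfolding Amat_def diff_Suc_1 c if_True using True by simp
next
  case F: False
  show ?thesis
  proof (cases "m = Suc i")
    case True
    then have c: "(i = m \<and> i < n) = False" "(i + 1 = m \<and> i < n) = True" using assms by auto
    show ?thesis unfolding Amat_def diff_Suc_1 c if_True if_False using True by simp
  next
    case False
    then have c: "(i = m \<and> i < n) = False" "(i + 1 = m \<and> i < n) = False"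
      "(i = n \<and> m = n) = False" "(i = n \<and> m < n) = False" using assms F by auto
    show ?thesis unfolding Amat_def diff_Suc_1 c if_False using False F by simp
  qed
qed

lemma gg_diff: "gg x y (Suc n) h - gg x y n h = (x*y)^(Suc n) * (if h \<ge> int (Suc n) then 1 else 0)"
proof (cases "h < 0")
  case True then show ?thesis by (simp add: gg_def)
next
  case False
  show ?thesis
  proof (cases "Suc n \<le> nat h")
    case True
    then have "min (Suc n) (nat h) = Suc n" "min n (nat h) = n" "h \<ge> int (Suc n)" using False by auto
    then show ?thesis using False by (simp add: gg_def G_Suc')
  next
    case c: False
    then have "min (Suc n) (nat h) = nat h" "min n (nat h) = nat h" "\<not> h \<ge> int (Suc n)" using False by auto
    then show ?thesis using False by (simp add: gg_def)
  qed
qed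

lemma qT: "(1+x)*(1+y) * Lp x y N one h - Lp x y (Suc N) one h = x*y * Lp x y N (dl 0) h"
proof -
  have e: "Lp x y (Suc N) one h = Lp x y N (Lop x y one) h"
  proof -
    have "Lp x y (Suc N) one = Lp x y (Suc 0 + N) one" by simp
    also have "\<dots> = Lp x y N (Lp x y (Suc 0) one)" by (rule Lp_comp)
    also have "Lp x y (Suc 0) one = Lop x y one" by simp
    finally show ?thesis by (rule fun_cong)
  qed
  have f: "(\<lambda>h. (1+x)*(1+y) * one h - Lop x y one h) = (\<lambda>h. x*y * dl 0 h)"
  proof
    fix h :: int
    show "(1+x)*(1+y) * one h - Lop x y one h = x*y * dl 0 h"
    proof (cases "h < 0")
      case True then show ?thesis by (simp add: one_def Lop_def dl_def)
    next
      case False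
      show ?thesis
      proof (cases "h = 0")
        case True
        have "Lop x y one h = 1 + (x + y)" using True by (simp add: one_def Lop_def)
        then show ?thesis using True by (simp add: one_def dl_def algebra_simps)
      next
        case F2: False
        have "Lop x y one h = 1 + (x + y) + x*y" using False F2 by (simp add: one_def Lop_def)
        then show ?thesis using False F2 by (simp add: one_def dl_def algebra_simps)
      qed
    qed
  qed
  have "(1+x)*(1+y) * Lp x y N one h - Lp x y (Suc N) one h
     = Lp x y N (\<lambda>h. (1+x)*(1+y) * one h) h - Lp x y N (Lop x y one) h"
    using e Lp_scale[of x y N "(1+x)*(1+y)" one h] by (rule_tac arg_cong2[where f="(-)"]; simp only:)
  also have "\<dots> = Lp x y N (\<lambda>h. (1+x)*(1+y) * one h - Lop x y one h) h"
    by (rule Lp_diff[symmetric])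
  also have "\<dots> = x*y * Lp x y N (dl 0) h"
    unfolding f Lp_scale ..
  finally show ?thesis .
qed

lemma core:
  fixes x y :: "'a::field"
  assumes x: "x \<noteq> 0" and y: "y \<noteq> 0"
  shows "(\<Sum>m<Suc n. Amat x y (Suc n) n m * Lp x y m one h)
       = Lp x y n (dl 0) h + (x*y)^n * (if h \<ge> int (Suc n) then 1 else 0)"
proof -
  define T where "T m = Lp x y m one h" for m
  define a1 where "a1 = (\<Sum>m<n. (-1)^m * cc x y n m * T m)"
  define a2 where "a2 = (\<Sum>m<n. (-1)^m * cc x y (Suc n) m * T m)"
  define s :: 'a where "s = (-1)^n"
  have xy: "x*y \<noteq> 0" using x y by simp
  have "x*y * (\<Sum>m<Suc n. Amat x y (Suc n) n m * Lp x y m one h)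
      = (\<Sum>m<n. x*y * Amat x y (Suc n) n m * T m) + x*y * Amat x y (Suc n) n n * T n"
    by (simp add: T_def sum_distrib_left distrib_left mult.assoc)
  also have "(\<Sum>m<n. x*y * Amat x y (Suc n) n m * T m) = (\<Sum>m<n. (-1)^(Suc n + m) * (cc x y n m + cc x y (Suc n) m) * T m)"
    by (rule sum.cong) (use xy in \<open>auto simp: Amat_last\<close>)
  also have "\<dots> = - s * (a1 + a2)"
    by (simp add: a1_def a2_def s_def sum_distrib_left sum.distrib power_add algebra_simps sum_subtractf sum_negf)
  also have "x*y * Amat x y (Suc n) n n = x*y - of_nat n * (x+y)"
    using xy by (simp add: Amat_corner)
  finally have L: "x*y * (\<Sum>m<Suc n. Amat x y (Suc n) n m * Lp x y m one h) = - s * (a1 + a2) + (x*y - of_nat n * (x+y)) * T n" .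
  have R1: "s * gg x y n h = a1 + s * T n"
    unfolding rho_gg[symmetric] s_def rho_def a1_def T_def lessThan_Suc_atMost[symmetric]
    by (simp add: cc_diag)
  have R2: "- s * gg x y (Suc n) h = a2 + s * (of_nat (Suc n) * (x+y)) * T n - s * T (Suc n)"
    unfolding s_def
    using rho_gg[of x y "Suc n" h]
    unfolding rho_def a2_def T_def lessThan_Suc_atMost[symmetric]
    by (simp add: cc_diag cc_sub algebra_simps)
  have Q: "(1+x)*(1+y) * T n - T (Suc n) = x*y * Lp x y n (dl 0) h"
    unfolding T_def by (rule qT)
  have D: "gg x y (Suc n) h - gg x y n h = (x*y)^(Suc n) * (if h \<ge> int (Suc n) then 1 else 0)"
    by (rule gg_diff)
  have s2: "s * s = 1" unfolding s_def by (simp add: power_mult_distrib[symmetric])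
  have a1: "a1 = s * gg x y n h - s * T n" using R1 by (simp add: algebra_simps)
  have a2: "a2 = - s * gg x y (Suc n) h - s * (of_nat (Suc n) * (x+y)) * T n + s * T (Suc n)"
    using R2 by (simp add: algebra_simps)
  have "x*y * (\<Sum>m<Suc n. Amat x y (Suc n) n m * Lp x y m one h)
      = (s*s) * (gg x y (Suc n) h - gg x y n h) + (s*s) * (of_nat n * (x+y) + (x+y) + 1) * T n - (s*s) * T (Suc n) + (x*y - of_nat n * (x+y)) * T n"
    unfolding L a1 a2 by (simp add: algebra_simps)
  also have "\<dots> = (gg x y (Suc n) h - gg x y n h) + ((1+x)*(1+y) * T n - T (Suc n))"
    unfolding s2 by (simp add: algebra_simps)
  also have "\<dots> = x*y * (Lp x y n (dl 0) h + (x*y)^n * (if h \<ge> int (Suc n) then 1 else 0))"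
    unfolding Q D by (simp add: algebra_simps)
  finally show ?thesis using xy by simp
qed

lemma T_eq: "(\<Sum>l\<le>k+m+j. PPpos x y (m+j) (int k) (int l)) = Lp x y j (Lp x y m one) (int k)"
proof -
  have "(\<Sum>l\<le>k+m+j. PPpos x y (m+j) (int k) (int l)) = Lp x y (m+j) one (int k)"
    by (rule sum_PPpos_one) simp
  then show ?thesis by (simp only: Lp_comp)
qed

lemma ind_part:
  assumes jn: "j < Suc n'"
  shows "Lp x y j (\<lambda>h. if h \<ge> int (Suc n') then 1 else 0) (int k)
       = (\<Sum>l\<le>k+j. PP x y j 0 (int (Suc n') - int k + int l))"
proof -
  have "Lp x y j (\<lambda>h. if h \<ge> int (Suc n') then 1 else 0) (int k)
      = Lp x y j (\<lambda>h. \<Sum>l\<le>k+j. 1 * dl (int (Suc n') + int l) h) (int k)"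
    by (rule Lp_local) (auto simp: sum_dl)
  also have "\<dots> = (\<Sum>l\<le>k+j. 1 * Lp x y j (dl (int (Suc n') + int l)) (int k))"
    by (rule Lp_sum) simp
  also have "\<dots> = (\<Sum>l\<le>k+j. PP x y j 0 (int (Suc n') - int k + int l))"
  proof (rule sum.cong)
    fix l assume "l \<in> {..k+j}"
    have "pos_paths j (int k) (int (Suc n') + int l) = paths j (int k) (int (Suc n') + int l)"
      by (rule pos_eq) (use jn in auto)
    then have "PPpos x y j (int k) (int (Suc n') + int l) = PP x y j (int k) (int (Suc n') + int l)"
      by (simp add: PPpos_def PP_def)
    also have "\<dots> = PP x y j 0 (int (Suc n') + int l - int k)"
      by (rule PP_shift[symmetric])
    finally show "1 * Lp x y j (dl (int (Suc n') + int l)) (int k) = PP x y j 0 (int (Suc n') - int k + int l)"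
      by (simp add: PPpos_Lp[symmetric] algebra_simps)
  qed simp
  finally show ?thesis .
qed

theorem lemma11:
  fixes x y :: "'a::field" and n k :: nat
  assumes "x \<noteq> 0" and "y \<noteq> 0" and "n \<ge> 1"
  shows "\<forall>i<n. \<forall>j<n.
    (\<Sum>m<n. Amat x y n i m * (\<Sum>l\<le>k + m + j. PPpos x y (m + j) (int k) (int l)))
    = PPpos x y (i + j) (int k) 0
      + (if i = n - 1
         then (x * y) ^ (n - 1) * (\<Sum>l\<le>k + j. PP x y j 0 (int n - int k + int l))
         else 0)"
proof (intro allI impI)
  fix i j assume i: "i < n" and j: "j < n"
  obtain n' where n: "n = Suc n'" using assms(3) by (cases n) auto
  have xy: "x*y \<noteq> 0" using assms by simp
  let ?X = "\<lambda>m. Lp x y j (Lp x y m one) (int k)"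
  have LHS: "(\<Sum>m<n. Amat x y n i m * (\<Sum>l\<le>k + m + j. PPpos x y (m + j) (int k) (int l)))
     = (\<Sum>m<Suc n'. Amat x y (Suc n') i m * ?X m)"
    unfolding n T_eq ..
  show "(\<Sum>m<n. Amat x y n i m * (\<Sum>l\<le>k + m + j. PPpos x y (m + j) (int k) (int l)))
    = PPpos x y (i + j) (int k) 0
      + (if i = n - 1
         then (x * y) ^ (n - 1) * (\<Sum>l\<le>k + j. PP x y j 0 (int n - int k + int l))
         else 0)"
  proof (cases "i = n'")
    case True
    have "(\<Sum>m<Suc n'. Amat x y (Suc n') i m * ?X m)
        = (\<Sum>m<Suc n'. Amat x y (Suc n') n' m * Lp x y j (Lp x y m one) (int k))"
      using True by simp
    also have "\<dots> = Lp x y j (\<lambda>h. \<Sum>m<Suc n'. Amat x y (Suc n') n' m * Lp x y m one h) (int k)"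
      by (rule Lp_sum[symmetric]) simp
    also have "(\<lambda>h. \<Sum>m<Suc n'. Amat x y (Suc n') n' m * Lp x y m one h)
        = (\<lambda>h. Lp x y n' (dl 0) h + (x*y)^n' * (if h \<ge> int (Suc n') then 1 else 0))"
      using core[OF assms(1,2)] by auto
    also have "Lp x y j (\<lambda>h. Lp x y n' (dl 0) h + (x*y)^n' * (if h \<ge> int (Suc n') then 1 else 0)) (int k)
       = Lp x y j (Lp x y n' (dl 0)) (int k) + (x*y)^n' * Lp x y j (\<lambda>h. if h \<ge> int (Suc n') then 1 else 0) (int k)"
      by (simp only: Lp_add Lp_scale)
    also have "Lp x y j (Lp x y n' (dl 0)) (int k) = PPpos x y (i+j) (int k) 0"
      using True by (simp only: Lp_comp[symmetric] PPpos_Lp)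
    also have "Lp x y j (\<lambda>h. if h \<ge> int (Suc n') then 1 else 0) (int k)
       = (\<Sum>l\<le>k+j. PP x y j 0 (int (Suc n') - int k + int l))"
      by (rule ind_part) (use j n in simp)
    finally show ?thesis using LHS True n by simp
  next
    case False
    with i n have i': "i < n'" by simp
    have "(\<Sum>m<Suc n'. Amat x y (Suc n') i m * ?X m)
       = (\<Sum>m<Suc n'. (if m = i then (1+x)*(1+y)/(x*y) * ?X i else 0) + (if m = Suc i then - 1/(x*y) * ?X (Suc i) else 0))"
      by (rule sum.cong) (auto simp: Amat_row[OF i'])
    also have "\<dots> = (1+x)*(1+y)/(x*y) * ?X i - 1/(x*y) * ?X (Suc i)"
      using i' by (simp add: sum.distrib)
    also have "\<dots> = ((1+x)*(1+y) * Lp x y (i+j) one (int k) - Lp x y (Suc (i+j)) one (int k)) / (x*y)"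
    proof -
      have c1: "?X i = Lp x y (i+j) one (int k)" by (simp only: Lp_comp[symmetric])
      have c2: "?X (Suc i) = Lp x y (Suc (i+j)) one (int k)" by (simp only: Lp_comp[symmetric] add_Suc)
      show ?thesis unfolding c1 c2 by (simp add: diff_divide_distrib)
    qed
    also have "\<dots> = PPpos x y (i + j) (int k) 0"
      unfolding qT using xy by (simp add: PPpos_Lp)
    finally show ?thesis using LHS False n by simp
  qed
qed

end
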